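(* Let $k$ be an algebraically closed field of characteristic $p>0$. Let $H$ be a finite group whose order is divisible by $p$ and which is generated by its elements of order prime to $p$. Let $r\neq p$ be a prime and let $A$ be a finite irreducible $\mathbb{F}_rH$-module (an elementary abelian $r$-group with $H$-action) such that $H$ has a regular orbit on $\mathrm{Hom}(A,k^* )$. Let $G = A\rtimes H$. Let $W$ be a $1$-dimensional $kA$-module affording a character $\lambda\in\mathrm{Hom}(A,k^* )$ lying in a regular $H$-orbit, and let $V = \mathrm{Ind}_A^G(W)$. Then $(G,V)$ is not weakly adequate.
   Context: For a representation $\rho:G\to\mathrm{GL}(V)$, $(G,V)$ is weakly adequate if $\mathrm{End}_k(V)$ is spanned by $\{\rho(g): g\in G,\ \rho(g)\text{ semisimple}\}$. A regular orbit is one on which $H$ acts with trivial stabilizers. *)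

theory Defs
  imports "HOL-Algebra.Group_Action" "HOL-Algebra.Generated_Groups"
    "HOL-Algebra.Multiplicative_Group" "HOL-Computational_Algebra.Polynomial"
begin

definition alg_closed :: "'k::field itself \<Rightarrow> bool" where
  "alg_closed _ \<longleftrightarrow> (\<forall>q :: 'k poly. degree q > 0 \<longrightarrow> (\<exists>x. poly q x = 0))"

(* Linear algebra on k^I for a finite index set I (functions vanishing outside I);
   matrices are functions on I x I (vanishing outside), entry (i,j) = coefficient
   of e_i in the image of e_j. *)
definition fspan :: "('x \<Rightarrow> 'k::field) set \<Rightarrow> ('x \<Rightarrow> 'k) set" where
  "fspan S = {v. \<exists>F c. finite F \<and> F \<subseteq> S \<and> v = (\<lambda>x. \<Sum>u\<in>F. c u * u x)}"

definition vecs :: "'i set \<Rightarrow> ('i \<Rightarrow> 'k::field) set" where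
  "vecs I = {v. \<forall>i. i \<notin> I \<longrightarrow> v i = 0}"

definition endos :: "'i set \<Rightarrow> ('i \<times> 'i \<Rightarrow> 'k::field) set" where
  "endos I = {M. \<forall>i j. (i \<notin> I \<or> j \<notin> I) \<longrightarrow> M (i, j) = 0}"

definition mat_vec :: "'i set \<Rightarrow> ('i \<times> 'i \<Rightarrow> 'k::field) \<Rightarrow> ('i \<Rightarrow> 'k) \<Rightarrow> ('i \<Rightarrow> 'k)" where
  "mat_vec I M v = (\<lambda>i. if i \<in> I then (\<Sum>j\<in>I. M (i, j) * v j) else 0)"

definition eigvecs :: "'i set \<Rightarrow> ('i \<times> 'i \<Rightarrow> 'k::field) \<Rightarrow> ('i \<Rightarrow> 'k) set" where
  "eigvecs I M = {v \<in> vecs I. v \<noteq> (\<lambda>_. 0) \<and> (\<exists>c. mat_vec I M v = (\<lambda>i. c * v i))}"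

(* semisimple (= diagonalizable over an algebraically closed field):
   the eigenvectors span the space *)
definition semisimple_on :: "'i set \<Rightarrow> ('i \<times> 'i \<Rightarrow> 'k::field) \<Rightarrow> bool" where
  "semisimple_on I M \<longleftrightarrow> fspan (eigvecs I M) = vecs I"

definition weakly_adequate ::
  "('g, 'b) monoid_scheme \<Rightarrow> 'i set \<Rightarrow> ('g \<Rightarrow> ('i \<times> 'i \<Rightarrow> 'k::field)) \<Rightarrow> bool" where
  "weakly_adequate G I \<rho> \<longleftrightarrow>
     fspan {\<rho> g | g. g \<in> carrier G \<and> semisimple_on I (\<rho> g)} = endos I"

definition sdprod ::
  "('a, 'c) monoid_scheme \<Rightarrow> ('h, 'd) monoid_scheme \<Rightarrow> ('h \<Rightarrow> 'a \<Rightarrow> 'a) \<Rightarrow> ('a \<times> 'h) monoid" where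
  "sdprod A H \<phi> = \<lparr>carrier = carrier A \<times> carrier H,
     monoid.mult = (\<lambda>(a1, h1) (a2, h2). (a1 \<otimes>\<^bsub>A\<^esub> \<phi> h1 a2, h1 \<otimes>\<^bsub>H\<^esub> h2)),
     monoid.one = (\<one>\<^bsub>A\<^esub>, \<one>\<^bsub>H\<^esub>)\<rparr>"

definition lin_chars :: "('a, 'c) monoid_scheme \<Rightarrow> ('a \<Rightarrow> 'k::field) set" where
  "lin_chars A = {lam. (\<forall>x\<in>carrier A. lam x \<noteq> 0)
      \<and> (\<forall>x\<in>carrier A. \<forall>y\<in>carrier A. lam (x \<otimes>\<^bsub>A\<^esub> y) = lam x * lam y)
      \<and> (\<forall>x. x \<notin> carrier A \<longrightarrow> lam x = 0)}"

definition char_act ::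
  "('a, 'c) monoid_scheme \<Rightarrow> ('h, 'd) monoid_scheme \<Rightarrow> ('h \<Rightarrow> 'a \<Rightarrow> 'a) \<Rightarrow> 'h \<Rightarrow> ('a \<Rightarrow> 'k::field) \<Rightarrow> ('a \<Rightarrow> 'k)" where
  "char_act A H \<phi> h lam = (\<lambda>a. if a \<in> carrier A then lam (\<phi> (inv\<^bsub>H\<^esub> h) a) else 0)"

(* lambda lies in a regular H-orbit: trivial stabilizer *)
definition regular_char ::
  "('a, 'c) monoid_scheme \<Rightarrow> ('h, 'd) monoid_scheme \<Rightarrow> ('h \<Rightarrow> 'a \<Rightarrow> 'a) \<Rightarrow> ('a \<Rightarrow> 'k::field) \<Rightarrow> bool" where
  "regular_char A H \<phi> lam \<longleftrightarrow>
     (\<forall>h\<in>carrier H. char_act A H \<phi> h lam = lam \<longrightarrow> h = \<one>\<^bsub>H\<^esub>)"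

(* Ind_A^G(W), W affording lambda, G = A \<rtimes> H, realized on the basis
   e_h = h \<otimes> w (h \<in> H, H a transversal of A in G):
   (a,h') e_j = lambda((h'j)^{-1} . a) e_{h'j}. *)
definition induced_rep ::
  "('a, 'c) monoid_scheme \<Rightarrow> ('h, 'd) monoid_scheme \<Rightarrow> ('h \<Rightarrow> 'a \<Rightarrow> 'a) \<Rightarrow> ('a \<Rightarrow> 'k::field)
     \<Rightarrow> ('a \<times> 'h) \<Rightarrow> ('h \<times> 'h \<Rightarrow> 'k)" where
  "induced_rep A H \<phi> lam g = (case g of (a, h') \<Rightarrow> (\<lambda>(i, j).
     if i \<in> carrier H \<and> j \<in> carrier H \<and> i = h' \<otimes>\<^bsub>H\<^esub> j
     then lam (\<phi> (inv\<^bsub>H\<^esub> (h' \<otimes>\<^bsub>H\<^esub> j)) a) else 0))"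

end

theory Submission
  imports Defs "HOL-Algebra.Sylow"
begin

lemma frob_inj:
  fixes x y :: "'k::field"
  assumes "prime CHAR('k)" "x ^ CHAR('k) = y ^ CHAR('k)"
  shows "x = y"
proof -
  have "(x + (- y)) ^ CHAR('k) = x ^ CHAR('k) + (- y) ^ CHAR('k)"
    using freshmans_dream assms(1) by blast
  also have "(- y) ^ CHAR('k) = - (y ^ CHAR('k))"
    using minus_power_prime_CHAR assms(1) by blast
  finally have "(x - y) ^ CHAR('k) = 0" using assms(2) by simp
  then show ?thesis by simp
qed

lemma exists_p_elem:
  assumes "group H" "finite (carrier H)" "prime p" "p dvd card (carrier H)"
  shows "\<exists>h\<in>carrier H. h \<noteq> \<one>\<^bsub>H\<^esub> \<and> h [^]\<^bsub>H\<^esub> p = \<one>\<^bsub>H\<^esub>"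
proof -
  interpret group H by fact
  obtain m where m: "card (carrier H) = p * m" using assms(4) by blast
  obtain P where P: "subgroup P H" "card P = p"
  proof -
    have "Coset.order H = p ^ 1 * m" using m by (simp add: Coset.order_def)
    then show ?thesis using sylow_thm[of p H 1 m] assms that by auto
  qed
  have "card P \<ge> 2" using P assms(3) prime_ge_2_nat by auto
  then obtain h where h: "h \<in> P" "h \<noteq> \<one>\<^bsub>H\<^esub>"
    by (metis One_nat_def card_le_Suc0_iff_eq[of P] not_less_eq_eq numeral_2_eq_2 subgroup.one_closed[OF P(1)] card.infinite[of P] zero_le)
  interpret P: group "H\<lparr>carrier := P\<rparr>" using subgroup_imp_group[OF P(1)] .
  have "h [^]\<^bsub>H\<lparr>carrier := P\<rparr>\<^esub> Coset.order (H\<lparr>carrier := P\<rparr>) = \<one>\<^bsub>H\<lparr>carrier := P\<rparr>\<^esub>"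
    by (rule P.pow_order_eq_1) (simp add: h)
  then have "h [^]\<^bsub>H\<^esub> p = \<one>\<^bsub>H\<^esub>"
    using P by (simp add: Coset.order_def nat_pow_consistent[symmetric])
  then show ?thesis using h P subgroup.subset by blast
qed

lemma not_semisimple:
  fixes A :: "('a, 'c) monoid_scheme" and H :: "('h, 'd) monoid_scheme"
    and \<phi> :: "'h \<Rightarrow> 'a \<Rightarrow> 'a" and lam :: "'a \<Rightarrow> 'k::field"
  assumes H_grp: "group H" and H_fin: "finite (carrier H)" and act: "group_action H (carrier A) \<phi>"
    and lam_char: "lam \<in> lin_chars A"
    and pr: "prime CHAR('k)"
    and h0: "h0 \<in> carrier H" "h0 \<noteq> \<one>\<^bsub>H\<^esub>" "h0 [^]\<^bsub>H\<^esub> CHAR('k) = \<one>\<^bsub>H\<^esub>"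
    and a: "a \<in> carrier A"
  shows "\<not> semisimple_on (carrier H) (induced_rep A H \<phi> lam (a, h0))"
proof
  interpret H: group H by fact
  interpret act: group_action H "carrier A" \<phi> by fact
  define I where "I = carrier H"
  define M where "M = induced_rep A H \<phi> lam (a, h0)"
  define mu where "mu = (\<lambda>i. lam (\<phi> (inv\<^bsub>H\<^esub> i) a))"
  define p where "p = CHAR('k)"
  have mu_nz: "mu i \<noteq> 0" if "i \<in> carrier H" for i
  proof -
    have "\<phi> (inv\<^bsub>H\<^esub> i) a \<in> carrier A"
      using act.element_image[of "inv\<^bsub>H\<^esub> i" a] that a by auto
    then show ?thesis using lam_char by (auto simp: mu_def lin_chars_def)
  qed
  have mv: "mat_vec I M v i = mu i * v (inv\<^bsub>H\<^esub> h0 \<otimes>\<^bsub>H\<^esub> i)" if i: "i \<in> carrier H" for v i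
  proof -
    have "mat_vec I M v i = (\<Sum>j\<in>carrier H. if j = inv\<^bsub>H\<^esub> h0 \<otimes>\<^bsub>H\<^esub> i then mu i * v j else 0)"
      unfolding mat_vec_def I_def M_def induced_rep_def
      using i h0(1)
      apply (simp)
      apply (rule sum.cong, simp)
      apply (auto simp: mu_def H.m_assoc[symmetric])
      done
    also have "\<dots> = mu i * v (inv\<^bsub>H\<^esub> h0 \<otimes>\<^bsub>H\<^esub> i)"
      using i h0(1) by (subst sum.delta[OF H_fin]) auto
    finally show ?thesis .
  qed
  define L where "L = (\<lambda>c0 (v::'h \<Rightarrow> 'k). c0 * v h0 - mu h0 * v \<one>\<^bsub>H\<^esub>)"
  define pi where "pi = (\<Prod>t<p. mu (h0 [^]\<^bsub>H\<^esub> Suc t))"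
  define c0 where "c0 = (SOME c. c ^ p = pi)"
  have Lzero: "L c0 v = 0" if v: "v \<in> eigvecs I M" for v
  proof -
    from v obtain c where vv: "v \<in> vecs I" "v \<noteq> (\<lambda>_. 0)" and ev: "mat_vec I M v = (\<lambda>i. c * v i)"
      unfolding eigvecs_def by blast
    have rel: "c * v (h0 \<otimes>\<^bsub>H\<^esub> j) = mu (h0 \<otimes>\<^bsub>H\<^esub> j) * v j" if j: "j \<in> carrier H" for j
    proof -
      have "c * v (h0 \<otimes>\<^bsub>H\<^esub> j) = mat_vec I M v (h0 \<otimes>\<^bsub>H\<^esub> j)" using ev by metis
      also have "\<dots> = mu (h0 \<otimes>\<^bsub>H\<^esub> j) * v j"
        using mv[of "h0 \<otimes>\<^bsub>H\<^esub> j" v] j h0(1) by (simp add: H.m_assoc[symmetric])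
      finally show ?thesis .
    qed
    have c_nz: "c \<noteq> 0"
    proof
      assume "c = 0"
      then have "v j = 0" for j
      proof (cases "j \<in> carrier H")
        case True
        then show ?thesis using rel[OF True] \<open>c = 0\<close> mu_nz[of "h0 \<otimes>\<^bsub>H\<^esub> j"] h0(1) by simp
      next
        case False
        then show ?thesis using vv(1) by (simp add: vecs_def I_def)
      qed
      then show False using vv(2) by auto
    qed
    have iter: "c ^ m * v (h0 [^]\<^bsub>H\<^esub> m) = (\<Prod>t<m. mu (h0 [^]\<^bsub>H\<^esub> Suc t)) * v \<one>\<^bsub>H\<^esub>" for m
    proof (induction m)
      case 0
      then show ?case by simp
    next
      case (Suc m)
      have "c ^ Suc m * v (h0 [^]\<^bsub>H\<^esub> Suc m) = c ^ m * (c * v (h0 \<otimes>\<^bsub>H\<^esub> (h0 [^]\<^bsub>H\<^esub> m)))"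
        by (simp only: H.nat_pow_Suc2[OF h0(1)]) (simp add: algebra_simps)
      also have "\<dots> = c ^ m * (mu (h0 [^]\<^bsub>H\<^esub> Suc m) * v (h0 [^]\<^bsub>H\<^esub> m))"
        using rel[of "h0 [^]\<^bsub>H\<^esub> m"] h0(1) by (simp only: H.nat_pow_Suc2[OF h0(1)] H.nat_pow_closed)
      also have "\<dots> = mu (h0 [^]\<^bsub>H\<^esub> Suc m) * (c ^ m * v (h0 [^]\<^bsub>H\<^esub> m))"
        by (simp add: algebra_simps)
      also have "\<dots> = (\<Prod>t<Suc m. mu (h0 [^]\<^bsub>H\<^esub> Suc t)) * v \<one>\<^bsub>H\<^esub>"
        using Suc.IH by (simp add: algebra_simps)
      finally show ?case .
    qed
    have rel1: "c * v h0 = mu h0 * v \<one>\<^bsub>H\<^esub>" using rel[of "\<one>\<^bsub>H\<^esub>"] h0(1) by simp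
    show ?thesis
    proof (cases "v \<one>\<^bsub>H\<^esub> = 0")
      case True
      then have "v h0 = 0" using rel1 c_nz by simp
      then show ?thesis using True by (simp add: L_def)
    next
      case False
      have "c ^ p * v \<one>\<^bsub>H\<^esub> = pi * v \<one>\<^bsub>H\<^esub>"
        using iter[of p] h0(3) by (simp add: pi_def p_def)
      then have cp: "c ^ p = pi" using False by simp
      then have "c0 ^ p = pi" unfolding c0_def by (rule someI)
      then have "c0 = c" using frob_inj[OF pr] cp by (simp add: p_def)
      then show ?thesis using rel1 by (simp add: L_def)
    qed
  qed
  assume ss: "semisimple_on (carrier H) (induced_rep A H \<phi> lam (a, h0))"
  define e1 where "e1 = (\<lambda>i. if i = \<one>\<^bsub>H\<^esub> then (1::'k) else 0)"
  have "e1 \<in> vecs I" by (simp add: e1_def vecs_def I_def)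
  then have "e1 \<in> fspan (eigvecs I M)" using ss by (simp add: semisimple_on_def I_def M_def)
  then obtain F cc where F: "finite F" "F \<subseteq> eigvecs I M" and e1: "e1 = (\<lambda>x. \<Sum>u\<in>F. cc u * u x)"
    unfolding fspan_def by blast
  have "L c0 e1 = (\<Sum>u\<in>F. cc u * L c0 u)"
    unfolding e1 L_def by (simp add: sum_distrib_left sum_subtractf algebra_simps)
  also have "\<dots> = 0" using F Lzero by (intro sum.neutral) auto
  finally have "L c0 e1 = 0" .
  moreover have "L c0 e1 = - mu h0" using h0(2) by (simp add: L_def e1_def)
  ultimately show False using mu_nz[OF h0(1)] by simp
qed

theorem theorem5p2:
  fixes A :: "('a, 'c) monoid_scheme" and H :: "('h, 'd) monoid_scheme"
    and \<phi> :: "'h \<Rightarrow> 'a \<Rightarrow> 'a" and lam :: "'a \<Rightarrow> 'k::field"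
    and p r :: nat
  assumes k_closed: "alg_closed TYPE('k)"
    and char_p: "CHAR('k) = p" and p_pos: "p > 0"
    and H_grp: "group H" and H_fin: "finite (carrier H)"
    and p_dvd: "p dvd card (carrier H)"
    and H_gen: "generate H {h \<in> carrier H. coprime (group.ord H h) p} = carrier H"
    and r_prime: "prime r" and r_ne_p: "r \<noteq> p"
    and A_grp: "comm_group A" and A_fin: "finite (carrier A)"
    and A_elem: "\<forall>x\<in>carrier A. x [^]\<^bsub>A\<^esub> r = \<one>\<^bsub>A\<^esub>"
    and act: "group_action H (carrier A) \<phi>"
    and act_aut: "\<forall>h\<in>carrier H. \<phi> h \<in> hom A A"
    and A_nontriv: "carrier A \<noteq> {\<one>\<^bsub>A\<^esub>}"
    and A_irred: "\<forall>B. subgroup B A \<and> (\<forall>h\<in>carrier H. \<phi> h ` B \<subseteq> B)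
                     \<longrightarrow> B = {\<one>\<^bsub>A\<^esub>} \<or> B = carrier A"
    and reg_orbit: "\<exists>mu \<in> (lin_chars A :: ('a \<Rightarrow> 'k) set). regular_char A H \<phi> mu"
    and lam_char: "lam \<in> lin_chars A"
    and lam_reg: "regular_char A H \<phi> lam"
  shows "\<not> weakly_adequate (sdprod A H \<phi>) (carrier H) (induced_rep A H \<phi> lam)"
proof
  interpret H: group H by fact
  have pr: "prime CHAR('k)" using prime_CHAR_semidom[where ?'a='k] p_pos char_p by simp
  obtain h0 where h0: "h0 \<in> carrier H" "h0 \<noteq> \<one>\<^bsub>H\<^esub>" "h0 [^]\<^bsub>H\<^esub> CHAR('k) = \<one>\<^bsub>H\<^esub>"
    using exists_p_elem[OF H_grp H_fin pr] p_dvd char_p by blast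
  have nss: "\<not> semisimple_on (carrier H) (induced_rep A H \<phi> lam (a, h0))" if "a \<in> carrier A" for a
    using not_semisimple[OF H_grp H_fin act lam_char pr h0 that] .
  assume wa: "weakly_adequate (sdprod A H \<phi>) (carrier H) (induced_rep A H \<phi> lam)"
  define E where "E = (\<lambda>x. if x = (h0, \<one>\<^bsub>H\<^esub>) then (1::'k) else 0)"
  have "E \<in> endos (carrier H)" using h0(1) by (auto simp: E_def endos_def)
  then obtain F c where F: "finite F"
      "F \<subseteq> {induced_rep A H \<phi> lam g | g. g \<in> carrier (sdprod A H \<phi>) \<and> semisimple_on (carrier H) (induced_rep A H \<phi> lam g)}"
    and E: "E = (\<lambda>x. \<Sum>u\<in>F. c u * u x)"
    using wa unfolding weakly_adequate_def fspan_def by blast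
  have "E (h0, \<one>\<^bsub>H\<^esub>) = (\<Sum>u\<in>F. c u * u (h0, \<one>\<^bsub>H\<^esub>))" using E by simp
  also have "\<dots> = 0"
  proof (intro sum.neutral ballI)
    fix u assume "u \<in> F"
    then obtain a h' where u: "u = induced_rep A H \<phi> lam (a, h')" "a \<in> carrier A" "h' \<in> carrier H"
      "semisimple_on (carrier H) (induced_rep A H \<phi> lam (a, h'))"
      using F(2) by (auto simp: sdprod_def)
    have "h' \<noteq> h0" using u nss by blast
    then show "c u * u (h0, \<one>\<^bsub>H\<^esub>) = 0" using u by (simp add: induced_rep_def)
  qed
  finally show False by (simp add: E_def)
qed

end
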